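(* Let $n\ge 2$, let $\Omega$ be a compact subset of $\mathbb{R}^n$, let $\widetilde\Omega=\mathrm{conv}(\Omega)$, and let $v\in S^{n-1}$. Put $\widetilde\Omega^+_{v,b}=\widetilde\Omega\cap\{x\in\mathbb{R}^n : x\cdot v>b\}$. Then for every $z\in \widetilde\Omega^+_{v,l_\Omega(v)}$, the closed segment $\overline{zz'}$ with $z'=\mathrm{R}_{v,l_\Omega(v)}(z)$ is contained in $\widetilde\Omega$.
   Context: $\mathrm{conv}(\Omega)$ is the convex hull of $\Omega$; $S^{n-1}$ is the unit sphere in $\mathbb{R}^n$. For $X\subset\mathbb{R}^n$, $v\in S^{n-1}$ and $b\in\mathbb{R}$, put $X^+_{v,b}=X\cap\{x\in\mathbb{R}^n : x\cdot v>b\}$, and let $\mathrm{R}_{v,b}$ be the reflection of $\mathbb{R}^n$ in the hyperplane $\{x : x\cdot v=b\}$. For a bounded $X\subset\mathbb{R}^n$, $l_X(v)=\inf\{a : \mathrm{R}_{v,c}(X^+_{v,c})\subset X \text{ for every } c\ge a\}$. $\overline{xy}$ denotes the closed line segment joining $x$ and $y$. *)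

theory Defs
  imports "HOL-Analysis.Analysis"
begin

definition cap :: "('a::real_inner) set \<Rightarrow> 'a \<Rightarrow> real \<Rightarrow> 'a set" where
  "cap X v b = X \<inter> {x. x \<bullet> v > b}"

definition refl_hyp :: "'a::real_inner \<Rightarrow> real \<Rightarrow> 'a \<Rightarrow> 'a" where
  "refl_hyp v b x = x - (2 * (x \<bullet> v - b)) *\<^sub>R v"

text \<open>For unit v, this is the reflection in the hyperplane {x. x \<bullet> v = b}.\<close>

definition lX :: "('a::real_inner) set \<Rightarrow> 'a \<Rightarrow> real" where
  "lX X v = Inf {a. \<forall>c\<ge>a. refl_hyp v c ` cap X v c \<subseteq> X}"

end

theory Submission
  imports Defs
begin

lemma refl_in_hull:
  fixes \<Omega> :: "'a::euclidean_space set"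
  assumes H: "\<forall>x\<in>\<Omega>. x \<bullet> v > c \<longrightarrow> refl_hyp v c x \<in> \<Omega>"
    and z: "z \<in> convex hull \<Omega>"
  shows "\<exists>t \<ge> 2 * (z \<bullet> v - c). z - t *\<^sub>R v \<in> convex hull \<Omega>"
proof -
  obtain S u where S: "finite S" "S \<subseteq> \<Omega>" "\<forall>x\<in>S. 0 \<le> u x" "sum u S = 1"
    "(\<Sum>x\<in>S. u x *\<^sub>R x) = z"
    using z unfolding convex_hull_explicit by blast
  define g where "g x = (if x \<bullet> v > c then 2 * (x \<bullet> v - c) else 0)" for x
  define \<phi> where "\<phi> x = x - g x *\<^sub>R v" for x
  have phi: "\<phi> x \<in> \<Omega>" if "x \<in> S" for x
    using H S(2) that unfolding \<phi>_def g_def refl_hyp_def by auto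
  have in_hull: "(\<Sum>x\<in>S. u x *\<^sub>R \<phi> x) \<in> convex hull \<Omega>"
    apply (rule convex_sum)
    using S phi hull_subset[of \<Omega> convex] by (auto simp: convex_convex_hull)
  have eq: "(\<Sum>x\<in>S. u x *\<^sub>R \<phi> x) = z - (\<Sum>x\<in>S. u x * g x) *\<^sub>R v"
    unfolding \<phi>_def by (simp add: scaleR_diff_right sum_subtractf S(5)[symmetric]
        scaleR_sum_left)
  have zv: "z \<bullet> v = (\<Sum>x\<in>S. u x * (x \<bullet> v))"
    using S(5) by (metis (no_types, lifting) inner_scaleR_left inner_sum_left sum.cong)
  have "2 * (z \<bullet> v - c) = (\<Sum>x\<in>S. u x * (2 * (x \<bullet> v - c)))"
  proof -
    have "(\<Sum>x\<in>S. c * (u x * 2)) = c * 2 * sum u S"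
    proof -
      have "(\<Sum>x\<in>S. c * (u x * 2)) = (\<Sum>x\<in>S. (2*c) * u x)" by (simp add: mult_ac)
      thus ?thesis by (simp add: sum_distrib_left[symmetric] sum_distrib_right[symmetric] mult_ac)
    qed
    thus ?thesis using S(4) by (simp add: zv sum_distrib_left algebra_simps sum_subtractf)
  qed
  also have "\<dots> \<le> (\<Sum>x\<in>S. u x * g x)"
    apply (rule sum_mono)
    using S(3) by (auto simp: g_def intro: mult_left_mono mult_nonneg_nonpos)
  finally show ?thesis using in_hull eq by auto
qed

theorem lemma2p2:
  fixes \<Omega> :: "(real ^ 'n) set" and v :: "real ^ 'n" and z :: "real ^ 'n"
  assumes "CARD('n) \<ge> 2"
    and "compact \<Omega>"
    and "norm v = 1"
    and "z \<in> cap (convex hull \<Omega>) v (lX \<Omega> v)"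
  shows "closed_segment z (refl_hyp v (lX \<Omega> v) z) \<subseteq> convex hull \<Omega>"
proof -
  define A where "A = {a. \<forall>c\<ge>a. refl_hyp v c ` cap \<Omega> v c \<subseteq> \<Omega>}"
  define l where "l = lX \<Omega> v"
  have lA: "l = Inf A" unfolding l_def A_def lX_def by simp
  have zh: "z \<in> convex hull \<Omega>" and zl: "z \<bullet> v > l"
    using assms(4) unfolding cap_def l_def by auto
  have vv: "v \<bullet> v = 1" using assms(3) by (simp add: norm_eq_1)
  have ne: "\<Omega> \<noteq> {}" using zh by auto
  obtain B where B: "\<And>x. x \<in> \<Omega> \<Longrightarrow> norm x \<le> B"
    using compact_imp_bounded[OF assms(2)] bounded_iff by blast
  have vb: "\<bar>x \<bullet> v\<bar> \<le> B" if "x \<in> \<Omega>" for x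
    using Cauchy_Schwarz_ineq2[of x v] assms(3) B[OF that] by simp
  have "B + 1 \<in> A"
    unfolding A_def cap_def using vb by force
  hence Ane: "A \<noteq> {}" by auto
  have Abdd: "bdd_below A"
  proof (rule bdd_belowI)
    fix a assume a: "a \<in> A"
    show "- B \<le> a"
    proof (rule ccontr)
      assume "\<not> - B \<le> a"
      obtain x0 where x0: "x0 \<in> \<Omega>" using ne by auto
      have "x0 \<in> cap \<Omega> v a" using vb[OF x0] x0 \<open>\<not> - B \<le> a\<close> unfolding cap_def by auto
      hence "refl_hyp v a x0 \<in> \<Omega>" using a unfolding A_def by auto
      hence "\<bar>refl_hyp v a x0 \<bullet> v\<bar> \<le> B" by (rule vb)
      moreover have "refl_hyp v a x0 \<bullet> v = 2 * a - x0 \<bullet> v"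
        unfolding refl_hyp_def by (simp add: inner_diff_left vv)
      ultimately show False using vb[OF x0] \<open>\<not> - B \<le> a\<close> by auto
    qed
  qed
  have good: "\<forall>x\<in>\<Omega>. x \<bullet> v > c \<longrightarrow> refl_hyp v c x \<in> \<Omega>" if cl: "c > l" for c
  proof -
    obtain a where "a \<in> A" "a < c" using cInf_less_iff[OF Ane Abdd, of c] cl lA by auto
    hence "refl_hyp v c ` cap \<Omega> v c \<subseteq> \<Omega>" unfolding A_def by auto
    thus ?thesis unfolding cap_def by blast
  qed
  define S0 where "S0 = 2 * (z \<bullet> v - l)"
  have S0: "S0 > 0" using zl S0_def by simp
  have rz: "refl_hyp v l z = z - S0 *\<^sub>R v" unfolding refl_hyp_def S0_def by simp
  have seg: "z - s *\<^sub>R v \<in> convex hull \<Omega>" if "0 < s" "s < S0" for s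
  proof -
    define c where "c = z \<bullet> v - s / 2"
    have "c > l" using that S0_def c_def by simp
    from refl_in_hull[OF good[OF this] zh] obtain t where
      t: "t \<ge> 2 * (z \<bullet> v - c)" "z - t *\<^sub>R v \<in> convex hull \<Omega>" by auto
    have ts: "t \<ge> s" using t(1) c_def by simp
    have "z - s *\<^sub>R v \<in> closed_segment z (z - t *\<^sub>R v)"
      unfolding closed_segment_def
      apply (rule CollectI, rule exI[of _ "s / t"])
      using ts that by (auto simp: algebra_simps)
    thus ?thesis using closed_segment_subset[OF zh t(2) convex_convex_hull] by blast
  qed
  have clo: "closed (convex hull \<Omega>)"
    by (simp add: assms(2) compact_convex_hull compact_imp_closed)
  have "z - S0 *\<^sub>R v \<in> closure (convex hull \<Omega>)"
  proof (rule iffD2[OF closure_approachable], intro allI impI)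
    fix e :: real assume e: "e > 0"
    define s where "s = max (S0 / 2) (S0 - e / 2)"
    have s: "0 < s" "s < S0" using S0 e s_def by auto
    have "dist (z - s *\<^sub>R v) (z - S0 *\<^sub>R v) = \<bar>S0 - s\<bar>"
      by (simp add: dist_norm algebra_simps assms(3) flip: scaleR_diff_left)
    also have "\<dots> < e" using s s_def e by auto
    finally show "\<exists>y\<in>convex hull \<Omega>. dist y (z - S0 *\<^sub>R v) < e"
      using seg[OF s] by blast
  qed
  hence "z - S0 *\<^sub>R v \<in> convex hull \<Omega>" using clo closure_closed by auto
  thus ?thesis unfolding l_def[symmetric] rz
    using closed_segment_subset[OF zh _ convex_convex_hull] by blast
qed

end
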